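(* Let $T>0$. Let $E:[0,T]\times\mathbb{R}^2\to\mathbb{R}^2$ and $b:[0,T]\times\mathbb{R}^2\to\mathbb{R}$ be bounded and Lipschitz (i.e. in $W^{1,\infty}$), with $\inf|b|>0$, and set $B=b\,e_3$. For $\Delta t>0$ and $\varepsilon>0$ set $t^n=n\Delta t$, $\lambda=\Delta t/\varepsilon^2$, and given $(x^0,v^0)\in\mathbb{R}^2\times\mathbb{R}^2$ define $(x^n,v^n)$ by $$\varepsilon\frac{x^{n+1}-x^n}{\Delta t}=v^{n+1},\qquad \varepsilon\frac{v^{n+1}-v^n}{\Delta t}=\frac1\varepsilon v^{n+1}\wedge B(t^n,x^n)+E(t^n,x^n),$$ and $(y^n)$ by $y^0=x^0$ and $\dfrac{y^{n+1}-y^n}{\Delta t}=U(t^n,y^n)$. Then there exist constants $C>0$ and $\lambda_0>0$ depending only on $E$, $b$ and $T$ such that whenever $0<\Delta t\le1$ and $\lambda\ge\lambda_0$, for all $n$ with $t^n\le T$, $$\|x^n-y^n\|\le\frac{C\,\Delta t}{\lambda}\Big[1+\Big\|\frac{v^0}{\varepsilon}-U(t^0,x^0)\Big\|\Big].$$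
   Context: Vectors of $\mathbb{R}^2$ are identified with vectors $(w_1,w_2,0)$ of $\mathbb{R}^3$, $e_3=(0,0,1)$, and $\wedge$ is the cross product; thus for $w\in\mathbb{R}^2$ and $B=b\,e_3$, $w\wedge B=b\,(w_2,-w_1)\in\mathbb{R}^2$. The guiding-center drift is $U(t,x)=\dfrac{E(t,x)\wedge B(t,x)}{\|B(t,x)\|^2}$. *)

theory Defs
  imports "HOL-Analysis.Analysis"
begin

text \<open>Vectors of R^2 are modelled as \<open>real^2\<close>, identified with (w1,w2,0) in R^3.
  For B = b e3, the cross product w \<wedge> B equals b (w2, -w1).\<close>

definition wedge_e3 :: "real^2 \<Rightarrow> real \<Rightarrow> real^2" where
  "wedge_e3 w b = b *\<^sub>R (\<chi> i. if i = 1 then w $ 2 else - (w $ 1))"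

text \<open>Guiding-center drift U(t,x) = E(t,x) \<wedge> B(t,x) / |B(t,x)|^2, with |B| = |b|.\<close>

definition drift :: "(real \<Rightarrow> real^2 \<Rightarrow> real^2) \<Rightarrow> (real \<Rightarrow> real^2 \<Rightarrow> real)
    \<Rightarrow> real \<Rightarrow> real^2 \<Rightarrow> real^2" where
  "drift E b t x = (1 / (b t x)\<^sup>2) *\<^sub>R wedge_e3 (E t x) (b t x)"

end

theory Submission
  imports Defs
begin
definition Jr :: "real^2 \<Rightarrow> real^2" where
  "Jr w = (\<chi> i. if i = 1 then w $ 2 else - (w $ 1))"
lemma wedge_Jr: "wedge_e3 w c = c *\<^sub>R Jr w" by (simp add: wedge_e3_def Jr_def)
lemma Jr_diff: "Jr (a - b) = Jr a - Jr b" by (simp add: Jr_def vec_eq_iff)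
lemma Jr_scale: "Jr (c *\<^sub>R a) = c *\<^sub>R Jr a" by (simp add: Jr_def vec_eq_iff)
lemma Jr_Jr: "Jr (Jr w) = - w"
  unfolding Jr_def vec_eq_iff by (simp add: forall_2)
lemma inner_Jr: "inner w (Jr w) = 0" "inner (Jr w) (Jr w) = inner w w"
  by (simp_all add: Jr_def inner_vec_def sum_2)
lemma norm_Jr: "norm (Jr w) = norm w"
  by (simp add: norm_eq_sqrt_inner inner_Jr)
lemma key_ineq: "\<bar>c\<bar> * norm d \<le> norm (d - c *\<^sub>R Jr d)"
proof -
  have "(norm (d - c *\<^sub>R Jr d))\<^sup>2 = (1 + c\<^sup>2) * (norm d)\<^sup>2"
    unfolding power2_norm_eq_inner
    by (simp add: inner_diff_left inner_diff_right inner_Jr inner_commute[of "Jr d" d] algebra_simps power2_eq_square)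
  hence "(\<bar>c\<bar> * norm d)\<^sup>2 \<le> (norm (d - c *\<^sub>R Jr d))\<^sup>2"
    by (simp add: power_mult_distrib algebra_simps)
  thus ?thesis by (rule power2_le_imp_le) simp
qed

lemma drift_Jr: "drift E b t x = (1 / b t x) *\<^sub>R Jr (E t x)"
  by (simp add: drift_def wedge_Jr power2_eq_square)

lemma E_drift: "b t x \<noteq> 0 \<Longrightarrow> E t x = - (b t x) *\<^sub>R Jr (drift E b t x)"
  by (simp add: drift_Jr Jr_scale Jr_Jr)

lemma dist_pair_le: "dist (t::real, x::real^2) (s, y) \<le> \<bar>t - s\<bar> + norm (x - y)"
proof -
  have "dist (t, x) (s, y) = sqrt ((dist t s)\<^sup>2 + (dist x y)\<^sup>2)" by (rule dist_Pair_Pair)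
  also have "\<dots> \<le> sqrt ((dist t s + dist x y)\<^sup>2)"
    by (rule real_sqrt_le_mono) (simp add: power2_eq_square algebra_simps)
  also have "\<dots> = dist t s + dist x y" by simp
  finally show ?thesis by (simp add: dist_real_def dist_norm)
qed

lemma drift_bound:
  assumes "\<forall>t\<in>{0..T}. \<forall>x. norm (E t x) \<le> ME" "\<forall>t\<in>{0..T}. \<forall>x. b0 \<le> \<bar>b t x\<bar>" "b0 > 0"
    and "t \<in> {0..T}"
  shows "norm (drift E b t x) \<le> ME / b0"
proof -
  have b: "b0 \<le> \<bar>b t x\<bar>" and e: "norm (E t x) \<le> ME" using assms by auto
  have "norm (drift E b t x) = norm (E t x) / \<bar>b t x\<bar>" by (simp add: drift_Jr norm_Jr)
  also have "\<dots> \<le> ME / \<bar>b t x\<bar>" using e b assms(3) by (simp add: divide_right_mono)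
  also have "\<dots> \<le> ME / b0" using e b assms(3) order_trans[OF norm_ge_zero e]
    by (intro divide_left_mono) auto
  finally show ?thesis .
qed

lemma drift_lip:
  assumes E: "\<forall>t\<in>{0..T}. \<forall>x. norm (E t x) \<le> ME" and B: "\<forall>t\<in>{0..T}. \<forall>x. b0 \<le> \<bar>b t x\<bar>" and b0: "b0 > 0"
    and LE: "LE-lipschitz_on ({0..T} \<times> UNIV) (\<lambda>(t, x). E t x)"
    and Lb: "Lb-lipschitz_on ({0..T} \<times> UNIV) (\<lambda>(t, x). b t x)"
    and t: "t \<in> {0..T}" and s: "s \<in> {0..T}"
  shows "norm (drift E b t x - drift E b s y) \<le> (Lb * ME / b0\<^sup>2 + LE / b0) * (\<bar>t - s\<bar> + norm (x - y))"
proof -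
  define r where "r = \<bar>t - s\<bar> + norm (x - y)"
  have r0: "0 \<le> r" unfolding r_def by simp
  have LE0: "0 \<le> LE" using LE lipschitz_on_nonneg by blast
  have Lb0: "0 \<le> Lb" using Lb lipschitz_on_nonneg by blast
  have dE: "norm (E t x - E s y) \<le> LE * r"
  proof -
    have "dist ((\<lambda>(t, x). E t x) (t,x)) ((\<lambda>(t, x). E t x) (s,y)) \<le> LE * dist (t,x) (s,y)"
      by (rule lipschitz_onD[OF LE]) (use t s in auto)
    also have "\<dots> \<le> LE * r" unfolding r_def by (rule mult_left_mono[OF dist_pair_le LE0])
    finally show ?thesis by (simp add: dist_norm)
  qed
  have db: "\<bar>b t x - b s y\<bar> \<le> Lb * r"
  proof -
    have "dist ((\<lambda>(t, x). b t x) (t,x)) ((\<lambda>(t, x). b t x) (s,y)) \<le> Lb * dist (t,x) (s,y)"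
      by (rule lipschitz_onD[OF Lb]) (use t s in auto)
    also have "\<dots> \<le> Lb * r" unfolding r_def by (rule mult_left_mono[OF dist_pair_le Lb0])
    finally show ?thesis by (simp add: dist_real_def)
  qed
  have b1: "b0 \<le> \<bar>b t x\<bar>" and b2: "b0 \<le> \<bar>b s y\<bar>" using B t s by auto
  have e1: "norm (E t x) \<le> ME" using E t by auto
  have ME0: "0 \<le> ME" using e1 norm_ge_zero order_trans by blast
  have "drift E b t x - drift E b s y = Jr ((1 / b t x - 1 / b s y) *\<^sub>R E t x + (1 / b s y) *\<^sub>R (E t x - E s y))"
    by (simp add: drift_Jr Jr_diff Jr_scale algebra_simps)
  hence "norm (drift E b t x - drift E b s y) = norm ((1 / b t x - 1 / b s y) *\<^sub>R E t x + (1 / b s y) *\<^sub>R (E t x - E s y))"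
    by (simp add: norm_Jr)
  also have "\<dots> \<le> \<bar>1 / b t x - 1 / b s y\<bar> * norm (E t x) + (1 / \<bar>b s y\<bar>) * norm (E t x - E s y)"
    by (rule order_trans[OF norm_triangle_ineq]) simp
  also have "\<dots> \<le> (Lb * r / b0\<^sup>2) * ME + (1 / b0) * (LE * r)"
  proof (rule add_mono)
    have "\<bar>1 / b t x - 1 / b s y\<bar> = \<bar>b t x - b s y\<bar> / (\<bar>b t x\<bar> * \<bar>b s y\<bar>)"
      using b1 b2 b0 by (simp add: field_simps abs_mult abs_minus_commute)
    also have "\<dots> \<le> Lb * r / (b0 * b0)"
      using b1 b2 b0 db r0 Lb0 by (intro frac_le mult_mono) auto
    finally have "\<bar>1 / b t x - 1 / b s y\<bar> \<le> Lb * r / b0\<^sup>2" by (simp add: power2_eq_square)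
    thus "\<bar>1 / b t x - 1 / b s y\<bar> * norm (E t x) \<le> (Lb * r / b0\<^sup>2) * ME"
      using e1 by (intro mult_mono) auto
    show "(1 / \<bar>b s y\<bar>) * norm (E t x - E s y) \<le> (1 / b0) * (LE * r)"
      using b2 b0 dE by (intro mult_mono) (auto simp: divide_simps)
  qed
  also have "\<dots> = (Lb * ME / b0\<^sup>2 + LE / b0) * r" by (simp add: algebra_simps)
  finally show ?thesis unfolding r_def .
qed
theorem theorem4p1:
  fixes T :: real
    and E :: "real \<Rightarrow> real^2 \<Rightarrow> real^2"
    and b :: "real \<Rightarrow> real^2 \<Rightarrow> real"
  assumes T_pos: "T > 0"
    and E_bdd: "bounded ((\<lambda>(t, x). E t x) ` ({0..T} \<times> UNIV))"
    and E_lip: "\<exists>L. L-lipschitz_on ({0..T} \<times> UNIV) (\<lambda>(t, x). E t x)"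
    and b_bdd: "bounded ((\<lambda>(t, x). b t x) ` ({0..T} \<times> UNIV))"
    and b_lip: "\<exists>L. L-lipschitz_on ({0..T} \<times> UNIV) (\<lambda>(t, x). b t x)"
    and b_inf: "\<exists>b0 > 0. \<forall>t\<in>{0..T}. \<forall>x. \<bar>b t x\<bar> \<ge> b0"
  shows "\<exists>C > 0. \<exists>lam0 > 0. \<forall>(dt::real) (\<epsilon>::real) (x::nat \<Rightarrow> real^2) (v::nat \<Rightarrow> real^2) (y::nat \<Rightarrow> real^2).
           0 < dt \<and> dt \<le> 1 \<and> \<epsilon> > 0 \<and> dt / \<epsilon>\<^sup>2 \<ge> lam0
         \<and> (\<forall>n. \<epsilon> *\<^sub>R ((1 / dt) *\<^sub>R (x (Suc n) - x n)) = v (Suc n))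
         \<and> (\<forall>n. \<epsilon> *\<^sub>R ((1 / dt) *\<^sub>R (v (Suc n) - v n))
                = (1 / \<epsilon>) *\<^sub>R wedge_e3 (v (Suc n)) (b (real n * dt) (x n)) + E (real n * dt) (x n))
         \<and> y 0 = x 0
         \<and> (\<forall>n. (1 / dt) *\<^sub>R (y (Suc n) - y n) = drift E b (real n * dt) (y n))
         \<longrightarrow> (\<forall>n. real n * dt \<le> T \<longrightarrow>
               norm (x n - y n) \<le> C * dt / (dt / \<epsilon>\<^sup>2)
                  * (1 + norm ((1 / \<epsilon>) *\<^sub>R v 0 - drift E b 0 (x 0))))"
proof -
  obtain ME where ME': "\<forall>z\<in>(\<lambda>(t, x). E t x) ` ({0..T} \<times> UNIV). norm z \<le> ME"
    using E_bdd unfolding bounded_iff by blast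
  have ME: "\<forall>t\<in>{0..T}. \<forall>x. norm (E t x) \<le> ME"
  proof (intro ballI allI)
    fix t x assume "t \<in> {0..T}"
    hence "E t x \<in> (\<lambda>(t, x). E t x) ` ({0..T} \<times> UNIV)" by force
    thus "norm (E t x) \<le> ME" using ME' by blast
  qed
  obtain LE where LE: "LE-lipschitz_on ({0..T} \<times> UNIV) (\<lambda>(t, x). E t x)" using E_lip by blast
  obtain Lb where Lb: "Lb-lipschitz_on ({0..T} \<times> UNIV) (\<lambda>(t, x). b t x)" using b_lip by blast
  obtain b0 where b0: "b0 > 0" and B: "\<forall>t\<in>{0..T}. \<forall>x. \<bar>b t x\<bar> \<ge> b0" using b_inf by blast
  have LE0: "0 \<le> LE" using LE lipschitz_on_nonneg by blast
  have Lb0: "0 \<le> Lb" using Lb lipschitz_on_nonneg by blast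
  have ME0: "0 \<le> ME" using ME T_pos order_trans[OF norm_ge_zero] by fastforce
  define MU where "MU = ME / b0"
  define LU where "LU = Lb * ME / b0\<^sup>2 + LE / b0"
  define K where "K = LU * (1 + MU) / b0"
  define lam0 where "lam0 = 2 * (1 + LU) / b0"
  define C where "C = exp (LU * T) * (2 / b0 + 2 * K * T) + 1"
  have MU0: "0 \<le> MU" unfolding MU_def using ME0 b0 by simp
  have LU0: "0 \<le> LU" unfolding LU_def using ME0 b0 LE0 Lb0 by simp
  have K0: "0 \<le> K" unfolding K_def using MU0 LU0 b0 by simp
  have lam00: "lam0 > 0" unfolding lam0_def using LU0 b0 by simp
  have C0: "C > 0" unfolding C_def using b0 K0 T_pos by (simp add: add_pos_nonneg)
  have UB: "\<And>t x. t \<in> {0..T} \<Longrightarrow> norm (drift E b t x) \<le> MU"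
    unfolding MU_def using drift_bound[OF ME B b0] by blast
  have UL: "\<And>t s x y. t \<in> {0..T} \<Longrightarrow> s \<in> {0..T} \<Longrightarrow>
      norm (drift E b t x - drift E b s y) \<le> LU * (\<bar>t - s\<bar> + norm (x - y))"
    unfolding LU_def using drift_lip[OF ME B b0 LE Lb] by blast
  show ?thesis
  proof (rule exI[of _ C], intro conjI C0, rule exI[of _ lam0], intro conjI lam00 allI impI)
    fix dt \<epsilon> :: real and x v y :: "nat \<Rightarrow> real^2" and n :: nat
    assume H: "0 < dt \<and> dt \<le> 1 \<and> \<epsilon> > 0 \<and> dt / \<epsilon>\<^sup>2 \<ge> lam0
         \<and> (\<forall>n. \<epsilon> *\<^sub>R ((1 / dt) *\<^sub>R (x (Suc n) - x n)) = v (Suc n))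
         \<and> (\<forall>n. \<epsilon> *\<^sub>R ((1 / dt) *\<^sub>R (v (Suc n) - v n))
                = (1 / \<epsilon>) *\<^sub>R wedge_e3 (v (Suc n)) (b (real n * dt) (x n)) + E (real n * dt) (x n))
         \<and> y 0 = x 0
         \<and> (\<forall>n. (1 / dt) *\<^sub>R (y (Suc n) - y n) = drift E b (real n * dt) (y n))"
      and nT: "real n * dt \<le> T"
    have dt0: "0 < dt" and dt1: "dt \<le> 1" and ep0: "\<epsilon> > 0" and laml: "dt / \<epsilon>\<^sup>2 \<ge> lam0"
      and HX: "\<And>n. \<epsilon> *\<^sub>R ((1 / dt) *\<^sub>R (x (Suc n) - x n)) = v (Suc n)"
      and HV: "\<And>n. \<epsilon> *\<^sub>R ((1 / dt) *\<^sub>R (v (Suc n) - v n))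
                = (1 / \<epsilon>) *\<^sub>R wedge_e3 (v (Suc n)) (b (real n * dt) (x n)) + E (real n * dt) (x n)"
      and Y0: "y 0 = x 0"
      and HY: "\<And>n. (1 / dt) *\<^sub>R (y (Suc n) - y n) = drift E b (real n * dt) (y n)"
      using H by auto
    define lam where "lam = dt / \<epsilon>\<^sup>2"
    have lampos: "lam > 0" unfolding lam_def using dt0 ep0 by simp
    define w where "w k = (1 / \<epsilon>) *\<^sub>R v k" for k
    define U where "U k = drift E b (real k * dt) (x k)" for k
    define a where "a k = norm (w (Suc k) - U k)" for k
    define D0 where "D0 = norm ((1 / \<epsilon>) *\<^sub>R v 0 - drift E b 0 (x 0))"
    have a0: "0 \<le> a k" for k unfolding a_def by simp
    have tin: "real k * dt \<in> {0..T}" if "real k * dt \<le> T" for k using that dt0 by simp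
    have X: "x (Suc k) = x k + dt *\<^sub>R w (Suc k)" for k
    proof -
      have "w (Suc k) = (1 / dt) *\<^sub>R (x (Suc k) - x k)"
        unfolding w_def HX[of k, symmetric] using ep0 by simp
      thus ?thesis using dt0 by simp
    qed
    have W: "w (Suc k) - (lam * b (real k * dt) (x k)) *\<^sub>R Jr (w (Suc k))
        = w k + lam *\<^sub>R E (real k * dt) (x k)" for k
    proof -
      have "(dt / \<epsilon>\<^sup>2) *\<^sub>R (\<epsilon> *\<^sub>R ((1 / dt) *\<^sub>R (v (Suc k) - v k))) = (dt / \<epsilon>\<^sup>2) *\<^sub>R
           ((1 / \<epsilon>) *\<^sub>R wedge_e3 (v (Suc k)) (b (real k * dt) (x k)) + E (real k * dt) (x k))"
        by (simp only: HV)
      hence e1: "(1 / \<epsilon>) *\<^sub>R (v (Suc k) - v k) = (dt / \<epsilon>^3 * b (real k * dt) (x k)) *\<^sub>R Jr (v (Suc k))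
          + lam *\<^sub>R E (real k * dt) (x k)"
        using dt0 ep0 unfolding lam_def by (simp add: wedge_Jr scaleR_add_right power2_eq_square power3_eq_cube)
      hence e2: "(1 / \<epsilon>) *\<^sub>R v (Suc k) - (dt / \<epsilon>^3 * b (real k * dt) (x k)) *\<^sub>R Jr (v (Suc k))
          = (1 / \<epsilon>) *\<^sub>R v k + lam *\<^sub>R E (real k * dt) (x k)"
        by (simp add: algebra_simps)
      have c: "lam * b (real k * dt) (x k) * (1 / \<epsilon>) = dt / \<epsilon>^3 * b (real k * dt) (x k)"
        unfolding lam_def using ep0 by (simp add: power2_eq_square power3_eq_cube)
      show ?thesis unfolding w_def Jr_scale scaleR_scaleR c using e2 .
    qed
    have A1: "a k \<le> norm (w k - U k) / (lam * b0)" if "real k * dt \<le> T" for k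
    proof -
      let ?b = "b (real k * dt) (x k)"
      have bb: "b0 \<le> \<bar>?b\<bar>" using B tin[OF that] by blast
      hence bne: "?b \<noteq> 0" using b0 by auto
      have EE: "E (real k * dt) (x k) = - ?b *\<^sub>R Jr (U k)" unfolding U_def by (rule E_drift[where b=b and t="real k * dt" and x="x k", OF bne])
      have "(w (Suc k) - U k) - (lam * ?b) *\<^sub>R Jr (w (Suc k) - U k) = w k - U k"
        using W[of k] unfolding EE by (simp add: Jr_diff algebra_simps)
      hence "\<bar>lam * ?b\<bar> * a k \<le> norm (w k - U k)" unfolding a_def using key_ineq by metis
      moreover have "lam * b0 * a k \<le> \<bar>lam * ?b\<bar> * a k"
        using bb lampos a0[of k] by (intro mult_right_mono) (auto simp: abs_mult)
      ultimately have "lam * b0 * a k \<le> norm (w k - U k)" by linarith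
      thus ?thesis using lampos b0 by (simp add: field_simps)
    qed
    show "norm (x n - y n) \<le> C * dt / (dt / \<epsilon>\<^sup>2) * (1 + norm ((1 / \<epsilon>) *\<^sub>R v 0 - drift E b 0 (x 0)))"
    proof -
    have lamb: "lam * b0 \<ge> 2 * (1 + LU)"
    proof -
      have "lam0 * b0 \<le> lam * b0" using laml b0 unfolding lam_def by (intro mult_right_mono) auto
      thus ?thesis unfolding lam0_def using b0 by simp
    qed
    have A2: "a (Suc k) \<le> a k / 2 + K * dt / lam" if "real (Suc k) * dt \<le> T" for k
    proof -
      have tk: "real k * dt \<in> {0..T}" and tk1: "real (Suc k) * dt \<in> {0..T}"
        using that dt0 tin by (auto simp: distrib_right)
      have wb: "norm (w (Suc k)) \<le> a k + MU"
      proof -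
        have "norm (w (Suc k)) \<le> norm (w (Suc k) - U k) + norm (U k)" using norm_triangle_ineq[of "w (Suc k) - U k" "U k"] by simp
        thus ?thesis unfolding a_def U_def using UB[OF tk, of "x k"] by linarith
      qed
      have "norm (U k - U (Suc k)) \<le> LU * (\<bar>real k * dt - real (Suc k) * dt\<bar> + norm (x k - x (Suc k)))"
        unfolding U_def by (rule UL[OF tk tk1])
      also have "\<dots> = LU * (dt + dt * norm (w (Suc k)))"
        using dt0 by (simp add: X algebra_simps)
      also have "\<dots> \<le> LU * (dt + dt * (a k + MU))"
        using LU0 dt0 wb by (intro mult_left_mono add_left_mono) auto
      finally have ud: "norm (U k - U (Suc k)) \<le> LU * (dt + dt * (a k + MU))" .
      have "norm (w (Suc k) - U (Suc k)) \<le> a k + norm (U k - U (Suc k))"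
        unfolding a_def using norm_triangle_ineq[of "w (Suc k) - U k" "U k - U (Suc k)"] by simp
      also have "\<dots> \<le> (1 + LU * dt) * a k + LU * dt * (1 + MU)"
        using ud by (simp add: algebra_simps)
      finally have nw: "norm (w (Suc k) - U (Suc k)) \<le> (1 + LU * dt) * a k + LU * dt * (1 + MU)" .
      have "a (Suc k) \<le> norm (w (Suc k) - U (Suc k)) / (lam * b0)" by (rule A1[OF that])
      also have "\<dots> \<le> ((1 + LU * dt) * a k + LU * dt * (1 + MU)) / (lam * b0)"
        using nw lampos b0 by (simp add: divide_right_mono)
      also have "\<dots> = (1 + LU * dt) * a k / (lam * b0) + K * dt / lam"
        unfolding K_def using lampos b0 by (simp add: field_simps)
      also have "(1 + LU * dt) * a k / (lam * b0) \<le> a k / 2"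
      proof -
        have "(1 + LU * dt) * a k \<le> (1 + LU) * a k"
          using LU0 dt1 a0[of k] by (intro mult_right_mono) (auto simp: mult_left_le)
        also have "\<dots> \<le> (lam * b0 / 2) * a k" using lamb a0[of k] by (intro mult_right_mono) auto
        finally show ?thesis using lampos b0 by (simp add: field_simps)
      qed
      finally show ?thesis by simp
    qed
    have A: "a k \<le> (1/2)^k * D0 / (lam * b0) + 2 * K * dt / lam" if "real k * dt \<le> T" for k
      using that
    proof (induction k)
      case 0
      have "a 0 \<le> norm (w 0 - U 0) / (lam * b0)" using A1[OF 0] .
      also have "norm (w 0 - U 0) = D0" unfolding D0_def w_def U_def by simp
      finally show ?case using K0 dt0 lampos by (simp add: add_increasing2)
    next
      case (Suc k)
      have "real k * dt \<le> T" using Suc.prems dt0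
        by (metis of_nat_le_iff le_SucI order.refl mult_right_mono less_imp_le order_trans)
      hence ih: "a k \<le> (1/2)^k * D0 / (lam * b0) + 2 * K * dt / lam" by (rule Suc.IH)
      have "a (Suc k) \<le> a k / 2 + K * dt / lam" by (rule A2[OF Suc.prems])
      also have "\<dots> \<le> ((1/2)^k * D0 / (lam * b0) + 2 * K * dt / lam) / 2 + K * dt / lam"
        using ih by simp
      also have "\<dots> = (1/2)^(Suc k) * D0 / (lam * b0) + 2 * K * dt / lam" by (simp add: field_simps)
      finally show ?case .
    qed
    have G: "(\<Sum>k<m. (1/2::real)^k) = 2 - 2 * (1/2)^m" for m
      by (induction m) (simp_all add: field_simps)
    define h where "h = LU * dt"
    have h0: "0 \<le> h" unfolding h_def using LU0 dt0 by simp
    have Eb: "norm (x k - y k) \<le> (1 + h)^k * (\<Sum>j<k. dt * a j)" if "real k * dt \<le> T" for k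
      using that
    proof (induction k)
      case 0 thus ?case using Y0 by simp
    next
      case (Suc k)
      have kT: "real k * dt \<le> T" using Suc.prems dt0
        by (metis of_nat_le_iff le_SucI order.refl mult_right_mono less_imp_le order_trans)
      have tk: "real k * dt \<in> {0..T}" using tin[OF kT] .
      have ih: "norm (x k - y k) \<le> (1 + h)^k * (\<Sum>j<k. dt * a j)" by (rule Suc.IH[OF kT])
      have ys: "y (Suc k) = y k + dt *\<^sub>R drift E b (real k * dt) (y k)"
        using HY[of k] dt0 by (metis (no_types) add_diff_cancel_left' diff_add_cancel scaleR_right_diff_distrib
            scaleR_one divide_self_if less_irrefl scaleR_scaleR times_divide_eq_left times_divide_eq_right)
      have "x (Suc k) - y (Suc k) = (x k - y k) + dt *\<^sub>R (U k - drift E b (real k * dt) (y k)) + dt *\<^sub>R (w (Suc k) - U k)"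
        unfolding X ys by (simp add: algebra_simps)
      hence "norm (x (Suc k) - y (Suc k)) \<le> norm (x k - y k) + dt * norm (U k - drift E b (real k * dt) (y k)) + dt * a k"
        unfolding a_def using dt0 by (metis (no_types, lifting) norm_triangle_le add_mono order.refl norm_scaleR abs_of_pos)
      also have "norm (U k - drift E b (real k * dt) (y k)) \<le> LU * norm (x k - y k)"
        using UL[OF tk tk, of "x k" "y k"] unfolding U_def by simp
      hence "dt * norm (U k - drift E b (real k * dt) (y k)) \<le> h * norm (x k - y k)"
        unfolding h_def using dt0 by (simp add: mult_left_mono)
      hence "norm (x k - y k) + dt * norm (U k - drift E b (real k * dt) (y k)) + dt * a k
           \<le> (1 + h) * norm (x k - y k) + dt * a k" by (simp add: algebra_simps)
      also have "\<dots> \<le> (1 + h) * ((1 + h)^k * (\<Sum>j<k. dt * a j)) + dt * a k"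
        using ih h0 by (intro add_right_mono mult_left_mono) auto
      also have "\<dots> \<le> (1 + h)^(Suc k) * (\<Sum>j<k. dt * a j) + (1 + h)^(Suc k) * (dt * a k)"
      proof -
        have "1 \<le> (1 + h)^(Suc k)" using h0 by (intro one_le_power) simp
        hence "1 * (dt * a k) \<le> (1 + h)^(Suc k) * (dt * a k)"
          using dt0 a0[of k] by (intro mult_right_mono) auto
        thus ?thesis by simp
      qed
      also have "\<dots> = (1 + h)^(Suc k) * (\<Sum>j<Suc k. dt * a j)" by (simp add: algebra_simps)
      finally show ?case .
    qed
    have S: "(\<Sum>j<n. dt * a j) \<le> dt / lam * (2 * D0 / b0 + 2 * K * T)"
    proof -
      have "(\<Sum>j<n. dt * a j) \<le> (\<Sum>j<n. dt * ((1/2)^j * D0 / (lam * b0) + 2 * K * dt / lam))"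
      proof (rule sum_mono)
        fix j assume "j \<in> {..<n}"
        hence "real j * dt \<le> T" using nT dt0 by (meson lessThan_iff less_imp_le of_nat_le_iff mult_right_mono order_trans)
        thus "dt * a j \<le> dt * ((1/2)^j * D0 / (lam * b0) + 2 * K * dt / lam)"
          using A dt0 by (simp add: mult_left_mono)
      qed
      also have "\<dots> = dt * D0 / (lam * b0) * (\<Sum>j<n. (1/2)^j) + (real n * dt) * (2 * K * dt / lam)"
        by (simp add: sum.distrib sum_distrib_left sum_divide_distrib algebra_simps)
      also have "\<dots> \<le> dt * D0 / (lam * b0) * 2 + T * (2 * K * dt / lam)"
      proof (rule add_mono)
        have D00: "0 \<le> D0" unfolding D0_def by simp
        show "dt * D0 / (lam * b0) * (\<Sum>j<n. (1/2)^j) \<le> dt * D0 / (lam * b0) * 2"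
          unfolding G using D00 dt0 lampos b0 by (intro mult_left_mono) auto
        show "real n * dt * (2 * K * dt / lam) \<le> T * (2 * K * dt / lam)"
          using nT K0 dt0 lampos by (intro mult_right_mono) auto
      qed
      also have "\<dots> = dt / lam * (2 * D0 / b0 + 2 * K * T)" using b0 lampos by (simp add: field_simps)
      finally show ?thesis .
    qed
    have P: "(1 + h)^n \<le> exp (LU * T)"
    proof -
      have "(1 + h)^n \<le> exp h ^ n" using h0 by (intro power_mono) auto
      also have "\<dots> = exp (real n * h)" by (simp add: exp_of_nat_mult)
      also have "\<dots> \<le> exp (LU * T)" unfolding h_def using nT LU0
        by (simp add: mult.left_commute mult_left_mono)
      finally show ?thesis .
    qed
    have D00: "0 \<le> D0" unfolding D0_def by simp
    have "norm (x n - y n) \<le> (1 + h)^n * (\<Sum>j<n. dt * a j)" by (rule Eb[OF nT])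
    also have "\<dots> \<le> exp (LU * T) * (dt / lam * (2 * D0 / b0 + 2 * K * T))"
      using P S h0 by (intro mult_mono) (auto intro!: sum_nonneg simp: a0 dt0 less_imp_le)
    also have "\<dots> = dt / lam * (exp (LU * T) * (2 / b0) * D0 + exp (LU * T) * (2 * K * T))"
      by (simp add: algebra_simps)
    also have "\<dots> \<le> dt / lam * (C * D0 + C * 1)"
    proof -
      have ee: "exp (LU * T) * (2 / b0) \<le> C" "exp (LU * T) * (2 * K * T) \<le> C"
        unfolding C_def using b0 K0 T_pos by (auto simp: algebra_simps add_increasing)
      show ?thesis using dt0 lampos D00 ee
        by (intro mult_left_mono add_mono mult_right_mono) auto
    qed
    also have "\<dots> = C * dt / (dt / \<epsilon>\<^sup>2) * (1 + D0)" unfolding lam_def by (simp add: algebra_simps)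
    finally show ?thesis unfolding D0_def .
    qed
  qed
qed

end
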